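(* Let $V$ be a finite-dimensional vector space over a field $\mathbf{k}$, $W\subseteq V$ a subspace, $q\in \mathrm{End}(V)$ a $W$-idempotent, and $k\in\mathbf{k}$. Let $(\mathcal{L},[\,,\,])$ be a Lie algebra over $\mathbf{k}$ and let $\varphi:\mathcal{L}\to \mathfrak{gl}^{[\,,\,]_{6,k}}_{q,W}(V)$ be a representation$^{6\text{-th}}$ of $\mathcal{L}$ on $V$ induced by $(q,W)$. Define, for $x\in\mathcal{L}$, $$f(x)=\varphi(x)+kq\varphi(x)-\varphi(x)q,\qquad g(x)=k\varphi(x)q.$$ Then $f:\mathcal{L}\to\mathfrak{gl}(V)$ and $g:\mathcal{L}\to\mathfrak{gl}(V)$ are both ordinary representations of $\mathcal{L}$ on $V$, i.e. Lie algebra homomorphisms into $\mathrm{End}(V)$ with the commutator bracket $[a,b]=ab-ba$.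
   Context: A linear map $q\in\mathrm{End}(V)$ is a $W$-idempotent if $q(W)=0$ and $(q-I)(V)\subseteq W$ ($I$ the identity map); such $q$ is idempotent. $\mathrm{End}_W(V)=\{f\in\mathrm{End}(V): f(W)\subseteq W\}$, which equals $\{f\in\mathrm{End}(V): qfq=qf\}$. The 6-th general linear Lie algebra $\mathfrak{gl}^{[\,,\,]_{6,k}}_{q,W}(V)$ is $\mathrm{End}_W(V)$ with bracket $[f,g]_{6,k}=fg-gf-fgq+gfq+kfqg-kgqf$. A representation$^{6\text{-th}}$ of a Lie algebra $\mathcal{L}$ on $V$ induced by $(q,W)$ is a Lie algebra homomorphism $\mathcal{L}\to \mathfrak{gl}^{[\,,\,]_{6,k}}_{q,W}(V)$. *)

theory Defs
  imports "HOL.Vector_Spaces"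
begin

definition lie_algebra :: "('k::field \<Rightarrow> 'l::ab_group_add \<Rightarrow> 'l) \<Rightarrow> ('l \<Rightarrow> 'l \<Rightarrow> 'l) \<Rightarrow> bool" where
  "lie_algebra sL br \<longleftrightarrow>
     Vector_Spaces.vector_space sL \<and>
     (\<forall>a x y z. br (sL a x + y) z = sL a (br x z) + br y z) \<and>
     (\<forall>a x y z. br x (sL a y + z) = sL a (br x y) + br x z) \<and>
     (\<forall>x. br x x = 0) \<and>
     (\<forall>x y z. br x (br y z) + br y (br z x) + br z (br x y) = 0)"

definition fin_dim_vs :: "('k::field \<Rightarrow> 'v::ab_group_add \<Rightarrow> 'v) \<Rightarrow> bool" where
  "fin_dim_vs s \<longleftrightarrow> (\<exists>B. Vector_Spaces.finite_dimensional_vector_space s B)"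

definition W_idempotent :: "('k::field \<Rightarrow> 'v::ab_group_add \<Rightarrow> 'v) \<Rightarrow> 'v set \<Rightarrow> ('v \<Rightarrow> 'v) \<Rightarrow> bool" where
  "W_idempotent s W q \<longleftrightarrow>
     Vector_Spaces.linear s s q \<and> (\<forall>w\<in>W. q w = 0) \<and> (\<forall>v. q v - v \<in> W)"

definition End_W :: "('k::field \<Rightarrow> 'v::ab_group_add \<Rightarrow> 'v) \<Rightarrow> 'v set \<Rightarrow> ('v \<Rightarrow> 'v) \<Rightarrow> bool" where
  "End_W s W f \<longleftrightarrow> Vector_Spaces.linear s s f \<and> f ` W \<subseteq> W"

definition bracket6 :: "('k::field \<Rightarrow> 'v::ab_group_add \<Rightarrow> 'v) \<Rightarrow> 'k \<Rightarrow> ('v \<Rightarrow> 'v) \<Rightarrow> ('v \<Rightarrow> 'v) \<Rightarrow> ('v \<Rightarrow> 'v) \<Rightarrow> ('v \<Rightarrow> 'v)" where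
  "bracket6 s k q f g = (\<lambda>v. f (g v) - g (f v) - f (g (q v)) + g (f (q v))
                              + s k (f (q (g v))) - s k (g (q (f v))))"

definition lin_into_End :: "('k::field \<Rightarrow> 'l::ab_group_add \<Rightarrow> 'l) \<Rightarrow> ('k \<Rightarrow> 'v::ab_group_add \<Rightarrow> 'v) \<Rightarrow> ('l \<Rightarrow> 'v \<Rightarrow> 'v) \<Rightarrow> bool" where
  "lin_into_End sL s \<phi> \<longleftrightarrow> (\<forall>a x y v. \<phi> (sL a x + y) v = s a (\<phi> x v) + \<phi> y v)"

definition rep6 :: "('k::field \<Rightarrow> 'l::ab_group_add \<Rightarrow> 'l) \<Rightarrow> ('l \<Rightarrow> 'l \<Rightarrow> 'l) \<Rightarrow> ('k \<Rightarrow> 'v::ab_group_add \<Rightarrow> 'v)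
     \<Rightarrow> 'v set \<Rightarrow> ('v \<Rightarrow> 'v) \<Rightarrow> 'k \<Rightarrow> ('l \<Rightarrow> 'v \<Rightarrow> 'v) \<Rightarrow> bool" where
  "rep6 sL br s W q k \<phi> \<longleftrightarrow>
     lin_into_End sL s \<phi> \<and> (\<forall>x. End_W s W (\<phi> x)) \<and>
     (\<forall>x y. \<phi> (br x y) = bracket6 s k q (\<phi> x) (\<phi> y))"

definition gl_rep :: "('k::field \<Rightarrow> 'l::ab_group_add \<Rightarrow> 'l) \<Rightarrow> ('l \<Rightarrow> 'l \<Rightarrow> 'l) \<Rightarrow> ('k \<Rightarrow> 'v::ab_group_add \<Rightarrow> 'v)
     \<Rightarrow> ('l \<Rightarrow> 'v \<Rightarrow> 'v) \<Rightarrow> bool" where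
  "gl_rep sL br s \<phi> \<longleftrightarrow>
     lin_into_End sL s \<phi> \<and> (\<forall>x. Vector_Spaces.linear s s (\<phi> x)) \<and>
     (\<forall>x y. \<phi> (br x y) = (\<lambda>v. \<phi> x (\<phi> y v) - \<phi> y (\<phi> x v)))"

end

theory Submission
  imports Defs
begin

theorem proposition2p1:
  fixes s :: "'k::field \<Rightarrow> 'v::ab_group_add \<Rightarrow> 'v"
    and sL :: "'k \<Rightarrow> 'l::ab_group_add \<Rightarrow> 'l"
    and br :: "'l \<Rightarrow> 'l \<Rightarrow> 'l"
    and W :: "'v set" and q :: "'v \<Rightarrow> 'v" and k :: 'k
    and \<phi> :: "'l \<Rightarrow> 'v \<Rightarrow> 'v"
  assumes "fin_dim_vs s"
    and "module.subspace s W"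
    and "W_idempotent s W q"
    and "lie_algebra sL br"
    and "rep6 sL br s W q k \<phi>"
  shows "gl_rep sL br s (\<lambda>x v. \<phi> x v + s k (q (\<phi> x v)) - \<phi> x (q v))
         \<and> gl_rep sL br s (\<lambda>x v. s k (\<phi> x (q v)))"
proof -
  have lq: "Vector_Spaces.linear s s q" and qW: "\<forall>w\<in>W. q w = 0" and qI: "\<forall>v. q v - v \<in> W"
    using assms(3) unfolding W_idempotent_def by auto
  interpret Q: Vector_Spaces.linear s s q by (rule lq)

  have lin: "lin_into_End sL s \<phi>" and EW: "\<And>x. End_W s W (\<phi> x)"
    and brk: "\<And>x y. \<phi> (br x y) = bracket6 s k q (\<phi> x) (\<phi> y)"
    using assms(5) unfolding rep6_def by auto
  have lA: "\<And>x. Vector_Spaces.linear s s (\<phi> x)" using EW unfolding End_W_def by auto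
  have AW: "\<And>x w. w \<in> W \<Longrightarrow> \<phi> x w \<in> W" using EW unfolding End_W_def by auto
  have Aadd: "\<And>x u w. \<phi> x (u + w) = \<phi> x u + \<phi> x w"
    using lA by (simp add: Vector_Spaces.linear_iff)
  have Ascale: "\<And>x c u. \<phi> x (s c u) = s c (\<phi> x u)"
    using lA by (simp add: Vector_Spaces.linear_iff)
  have Adiff: "\<And>x u w. \<phi> x (u - w) = \<phi> x u - \<phi> x w"
    using lA by (metis Vector_Spaces.linear.axioms(3) module_hom.diff Vector_Spaces.linear_def)
  have Aneg: "\<And>x u. \<phi> x (- u) = - \<phi> x u"
    using Adiff by (metis diff_0 diff_self)
  have qq: "\<And>v. q (q v) = q v"
  proof -
    fix v have "q (q v - v) = 0" using qW qI by auto
    thus "q (q v) = q v" by (simp add: Q.diff)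
  qed
  have qAq: "\<And>x v. q (\<phi> x (q v)) = q (\<phi> x v)"
  proof -
    fix x v have "\<phi> x (q v - v) \<in> W" using AW qI by auto
    hence "q (\<phi> x (q v - v)) = 0" using qW by auto
    thus "q (\<phi> x (q v)) = q (\<phi> x v)" by (simp add: Adiff Q.diff)
  qed
  have qABq: "\<And>x y v. q (\<phi> x (\<phi> y (q v))) = q (\<phi> x (\<phi> y v))"
    by (metis qAq)
  have linf: "lin_into_End sL s \<phi> \<Longrightarrow> True" by simp
  note simps = Aadd Ascale Adiff Aneg Q.add Q.scale Q.diff Q.neg qq qAq qABq
     Q.vs1.scale_right_distrib Q.vs1.scale_right_diff_distrib Q.vs1.scale_minus_right Q.vs1.scale_scale
  have L: "\<And>a x y v. \<phi> (sL a x + y) v = s a (\<phi> x v) + \<phi> y v"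
    using lin unfolding lin_into_End_def by auto
  show ?thesis
    unfolding gl_rep_def lin_into_End_def
    apply (intro conjI allI)
         apply (simp only: L, simp add: simps algebra_simps mult.commute)
        apply (unfold_locales; simp add: simps algebra_simps)
       apply (rule ext, simp add: brk bracket6_def simps algebra_simps)
      apply (simp only: L, simp add: simps algebra_simps mult.commute)
     apply (unfold_locales; simp add: simps algebra_simps)
    apply (rule ext, simp add: brk bracket6_def simps algebra_simps)
    done
qed

end
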